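(* In the Shepp--Olkin setting with $p_i'\ge0$ for all $i$ and $v=\sum_ip_i'>0$, fix $t$ with $f_k(t)>0$ for all $k$, and let $\alpha_k=\frac{\sum_ip_i'p_i(t)f_{k-1}^{(i)}(t)}{vf_k(t)}$. Then for all $k=0,\ldots,n-2$, $$\alpha_{k+1}(1-\alpha_{k+1})f_{k+1}^2-\alpha_{k+2}(1-\alpha_k)f_kf_{k+2}\ge0$$ (all evaluated at $t$).
   Context: Shepp--Olkin setting: $p_1,\ldots,p_n:[0,1]\to[0,1]$ are affine functions with constant derivatives $p_i'$. $f_k(t)$, $k=0,\ldots,n$, is the probability mass function of a sum of independent Bernoulli variables with parameters $p_1(t),\ldots,p_n(t)$; $f^{(i)}_k(t)$ is the mass function of the sum omitting the $i$-th variable (extended by $0$ outside $\{0,\ldots,n-1\}$). *)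

theory Defs
  imports "HOL-Analysis.Analysis"
begin

text \<open>Mass function at k (an integer) of the sum of independent Bernoulli variables
  with parameters q i, i in S. Zero for k outside 0..card S (automatically, and
  explicitly for negative k).\<close>
definition pbin :: "(nat \<Rightarrow> real) \<Rightarrow> nat set \<Rightarrow> int \<Rightarrow> real" where
  "pbin q S k = (if k < 0 then 0 else
     (\<Sum>A\<in>{A. A \<subseteq> S \<and> card A = nat k}.
        (\<Prod>i\<in>A. q i) * (\<Prod>i\<in>S - A. 1 - q i)))"

definition shepp_olkin_affine :: "nat \<Rightarrow> (nat \<Rightarrow> real \<Rightarrow> real) \<Rightarrow> (nat \<Rightarrow> real) \<Rightarrow> bool" where
  "shepp_olkin_affine n p p' \<longleftrightarrow>
     (\<forall>i<n. (\<exists>c. \<forall>t. p i t = c + p' i * t) \<and>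
            (\<forall>t\<in>{0..1}. p i t \<in> {0..1}))"

definition SO_f :: "nat \<Rightarrow> (nat \<Rightarrow> real \<Rightarrow> real) \<Rightarrow> real \<Rightarrow> int \<Rightarrow> real" where
  "SO_f n p t k = pbin (\<lambda>i. p i t) {..<n} k"

definition SO_fi :: "nat \<Rightarrow> (nat \<Rightarrow> real \<Rightarrow> real) \<Rightarrow> nat \<Rightarrow> real \<Rightarrow> int \<Rightarrow> real" where
  "SO_fi n p i t k = pbin (\<lambda>j. p j t) ({..<n} - {i}) k"

definition SO_alpha :: "nat \<Rightarrow> (nat \<Rightarrow> real \<Rightarrow> real) \<Rightarrow> (nat \<Rightarrow> real) \<Rightarrow> real \<Rightarrow> int \<Rightarrow> real" where
  "SO_alpha n p p' t k =
     (\<Sum>i<n. p' i * p i t * SO_fi n p i t (k - 1)) / ((\<Sum>i<n. p' i) * SO_f n p t k)"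

end

theory Submission imports Defs begin
lemma pbin_neg: "k < 0 \<Longrightarrow> pbin q S k = 0" by (simp add: pbin_def)

lemma pbin_empty: "pbin q {} k = (if k = 0 then 1 else 0)"
proof (cases "k < 0")
  case True then show ?thesis by (simp add: pbin_def)
next
  case False
  show ?thesis
  proof (cases "k = 0")
    case True
    have "{A. A \<subseteq> ({}::nat set) \<and> card A = nat k} = {{}}" using True by auto
    then show ?thesis using True by (simp add: pbin_def)
  next
    case k0: False
    have "{A. A \<subseteq> ({}::nat set) \<and> card A = nat k} = {}" using k0 False by auto
    then show ?thesis using k0 False unfolding pbin_def by simp
  qed
qed
lemma pbin_insert:
  assumes fin: "finite S" and aS: "a \<notin> S"
  shows "pbin q (insert a S) k = q a * pbin q S (k-1) + (1 - q a) * pbin q S k"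
proof (cases "k < 0")
  case True then show ?thesis by (simp add: pbin_def)
next
  case False
  define C where "C = {A. A \<subseteq> insert a S \<and> card A = nat k}"
  define C2 where "C2 = {A. A \<subseteq> S \<and> card A = nat k}"
  define C1 where "C1 = {A\<in>C. a \<in> A}"
  let ?F = "\<lambda>A. (\<Prod>i\<in>A. q i) * (\<Prod>i\<in>insert a S - A. 1 - q i)"
  have finC: "finite C" unfolding C_def using fin
    by (rule_tac finite_subset[of _ "Pow (insert a S)"]) auto
  have CU: "C = C2 \<union> C1" "C2 \<inter> C1 = {}" unfolding C_def C1_def C2_def using aS by auto
  have fin12: "finite C1" "finite C2" using finC CU by auto
  have "pbin q (insert a S) k = sum ?F C" using False by (simp add: pbin_def C_def)
  also have "\<dots> = sum ?F C2 + sum ?F C1" using CU fin12 by (simp add: sum.union_disjoint)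
  also have "sum ?F C2 = (1 - q a) * pbin q S k"
  proof -
    have "sum ?F C2 = (\<Sum>A\<in>C2. (1 - q a) * ((\<Prod>i\<in>A. q i) * (\<Prod>i\<in>S - A. 1 - q i)))"
    proof (rule sum.cong)
      fix A assume A: "A \<in> C2"
      then have "insert a S - A = insert a (S - A)" using aS by (auto simp: C2_def)
      moreover have "a \<notin> S - A" using aS by auto
      ultimately have "(\<Prod>i\<in>insert a S - A. 1 - q i) = (1 - q a) * (\<Prod>i\<in>S - A. 1 - q i)"
        using fin by simp
      then show "?F A = (1 - q a) * ((\<Prod>i\<in>A. q i) * (\<Prod>i\<in>S - A. 1 - q i))" by simp
    qed simp
    also have "\<dots> = (1 - q a) * pbin q S k" using False
      by (simp add: pbin_def C2_def sum_distrib_left)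
    finally show ?thesis .
  qed
  also have "sum ?F C1 = q a * pbin q S (k-1)"
  proof (cases "k = 0")
    case True
    have "C1 = {}"
    proof (rule ccontr)
      assume "C1 \<noteq> {}"
      then obtain A where A: "A \<subseteq> insert a S" "card A = 0" "a \<in> A"
        using True by (auto simp: C1_def C_def)
      have "finite A" using A(1) fin by (meson finite_insert finite_subset)
      then show False using A by simp
    qed
    then show ?thesis using True by (simp add: pbin_def)
  next
    case k1: False
    define D where "D = {B. B \<subseteq> S \<and> card B = nat (k-1)}"
    have nk: "nat k = Suc (nat (k-1))" using k1 False by simp
    have img: "C1 = insert a ` D"
    proof
      show "C1 \<subseteq> insert a ` D"
      proof
        fix A assume A: "A \<in> C1"
        then have A1: "A \<subseteq> insert a S" "card A = nat k" "a \<in> A" by (auto simp: C1_def C_def)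
        have fA: "finite A" using A1(1) fin by (meson finite_insert finite_subset)
        have "A - {a} \<in> D" using A1 fA aS nk by (auto simp: D_def)
        moreover have "A = insert a (A - {a})" using A1 by auto
        ultimately show "A \<in> insert a ` D" by blast
      qed
    next
      show "insert a ` D \<subseteq> C1"
      proof
        fix A assume "A \<in> insert a ` D"
        then obtain B where B: "B \<in> D" "A = insert a B" by blast
        have fB: "finite B" using B fin by (auto simp: D_def intro: finite_subset)
        have "a \<notin> B" using B aS by (auto simp: D_def)
        then have "card A = nat k" using B fB nk by (simp add: D_def)
        then show "A \<in> C1" using B by (auto simp: C1_def C_def D_def)
      qed
    qed
    have inj: "inj_on (insert a) D"
    proof (rule inj_onI)
      fix B B' assume BB: "B \<in> D" "B' \<in> D" "insert a B = insert a B'"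
      then have "a \<notin> B" "a \<notin> B'" using aS by (auto simp: D_def)
      then show "B = B'" using BB(3) by (metis Diff_insert_absorb)
    qed
    have "sum ?F C1 = sum (?F \<circ> insert a) D" using img inj by (simp add: sum.reindex)
    also have "\<dots> = (\<Sum>B\<in>D. q a * ((\<Prod>i\<in>B. q i) * (\<Prod>i\<in>S - B. 1 - q i)))"
    proof (rule sum.cong)
      fix B assume B: "B \<in> D"
      have fB: "finite B" using B fin by (auto simp: D_def intro: finite_subset)
      have "a \<notin> B" using B aS by (auto simp: D_def)
      moreover have "insert a S - insert a B = S - B" using aS by auto
      ultimately show "(?F \<circ> insert a) B = q a * ((\<Prod>i\<in>B. q i) * (\<Prod>i\<in>S - B. 1 - q i))"
        using fB by simp
    qed simp
    also have "\<dots> = q a * pbin q S (k-1)" using False k1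
      by (simp add: pbin_def D_def sum_distrib_left)
    finally show ?thesis .
  qed
  finally show ?thesis by simp
qed


lemma pbin_nonneg:
  assumes "finite S" "\<forall>i\<in>S. 0 \<le> q i \<and> q i \<le> 1"
  shows "0 \<le> pbin q S k"
  unfolding pbin_def using assms
  by (auto intro!: sum_nonneg mult_nonneg_nonneg prod_nonneg)

lemma pbin_lc_gen:
  assumes "finite S" "\<forall>i\<in>S. 0 \<le> q i \<and> q i \<le> 1"
  shows "m \<le> l \<Longrightarrow> pbin q S (m-1) * pbin q S (l+1) \<le> pbin q S m * pbin q S l"
  using assms
proof (induction S arbitrary: m l rule: finite_induct)
  case empty
  then show ?case by (auto simp: pbin_empty)
next
  case (insert a S)
  define h where "h = pbin q S"
  define Q where "Q = q a"
  define R where "R = 1 - q a"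
  have QR: "0 \<le> Q" "0 \<le> R" using insert.prems by (auto simp: Q_def R_def)
  have qS: "\<forall>i\<in>S. 0 \<le> q i \<and> q i \<le> 1" using insert.prems by auto
  have rec: "\<And>k. pbin q (insert a S) k = Q * h (k-1) + R * h k"
    using pbin_insert[OF insert.hyps] by (simp add: h_def Q_def R_def)
  have IH: "\<And>m l. m \<le> l \<Longrightarrow> h (m-1) * h (l+1) \<le> h m * h l"
    using insert.IH qS by (simp add: h_def)
  have X: "h (m-2) * h l \<le> h (m-1) * h (l-1)"
    using IH[of "m-1" "l-1"] insert.prems(1) by (simp add: algebra_simps)
  have Y: "h (m-1) * h (l+1) \<le> h m * h l" using IH insert.prems(1) by simp
  have Z: "h (m-2) * h (l+1) \<le> h m * h (l-1)"
  proof (cases "m = l")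
    case True
    then show ?thesis using IH[of "l-1" l] by (simp add: algebra_simps)
  next
    case False
    then have "m \<le> l - 1" using insert.prems(1) by simp
    then have "h (m-1) * h l \<le> h m * h (l-1)" using IH[of m "l-1"] by simp
    moreover have "h (m-2) * h (l+1) \<le> h (m-1) * h l"
      using IH[of "m-1" l] insert.prems(1) by (simp add: algebra_simps)
    ultimately show ?thesis by linarith
  qed
  have e: "pbin q (insert a S) m * pbin q (insert a S) l - pbin q (insert a S) (m-1) * pbin q (insert a S) (l+1)
    = Q^2 * (h (m-1) * h (l-1) - h (m-2) * h l) + R^2 * (h m * h l - h (m-1) * h (l+1))
      + Q * R * (h m * h (l-1) - h (m-2) * h (l+1))"
    unfolding rec by (simp add: algebra_simps power2_eq_square)
  have "0 \<le> Q^2 * (h (m-1) * h (l-1) - h (m-2) * h l) + R^2 * (h m * h l - h (m-1) * h (l+1))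
      + Q * R * (h m * h (l-1) - h (m-2) * h (l+1))"
    using X Y Z QR by (intro add_nonneg_nonneg mult_nonneg_nonneg) auto
  then show ?case using e by linarith
qed

lemma pbin_lc:
  assumes "finite S" "\<forall>i\<in>S. 0 \<le> q i \<and> q i \<le> 1"
  shows "pbin q S (k-1) * pbin q S (k+1) \<le> (pbin q S k)^2"
  using pbin_lc_gen[OF assms, of k k] by (simp add: power2_eq_square)

theorem proposition5p4:
  fixes n :: nat and p :: "nat \<Rightarrow> real \<Rightarrow> real" and p' :: "nat \<Rightarrow> real" and t :: real
  assumes "shepp_olkin_affine n p p'"
    and "\<forall>i<n. p' i \<ge> 0"
    and "(\<Sum>i<n. p' i) > 0"
    and "t \<in> {0..1}"
    and "\<forall>k::int. 0 \<le> k \<and> k \<le> int n \<longrightarrow> SO_f n p t k > 0"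
  shows "\<forall>k::int. 0 \<le> k \<and> k \<le> int n - 2 \<longrightarrow>
    SO_alpha n p p' t (k + 1) * (1 - SO_alpha n p p' t (k + 1)) * (SO_f n p t (k + 1))\<^sup>2
    - SO_alpha n p p' t (k + 2) * (1 - SO_alpha n p p' t k) * SO_f n p t k * SO_f n p t (k + 2) \<ge> 0"
proof (intro allI impI)
  fix k :: int assume k: "0 \<le> k \<and> k \<le> int n - 2"
  define N where "N = {..<n}"
  define Q where "Q = (\<lambda>i. p i t)"
  define v where "v = (\<Sum>i<n. p' i)"
  define g where "g = (\<lambda>i. pbin Q (N - {i}))"
  define f where "f = pbin Q N"
  have v0: "v > 0" using assms(3) by (simp add: v_def)
  have qr: "\<forall>i\<in>N. 0 \<le> Q i \<and> Q i \<le> 1"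
    using assms(1,4) unfolding shepp_olkin_affine_def N_def Q_def by auto
  have finN: "finite N" by (simp add: N_def)
  have fpos: "f k > 0" "f (k+1) > 0" "f (k+2) > 0"
    using assms(5) k by (auto simp: f_def SO_f_def N_def Q_def)
  have F1: "f m = Q i * g i (m-1) + (1 - Q i) * g i m" if "i < n" for i m
  proof -
    have "insert i (N - {i}) = N" using that by (auto simp: N_def)
    then show ?thesis using pbin_insert[of "N - {i}" i Q m] finN
      by (simp add: f_def g_def)
  qed
  define a where "a = (\<lambda>m. \<Sum>i<n. p' i * Q i * g i (m-1))"
  define b where "b = (\<lambda>m. \<Sum>i<n. p' i * (1 - Q i) * g i m)"
  have Fv: "v * f m = a m + b m" for m
  proof -
    have "v * f m = (\<Sum>i<n. p' i * (Q i * g i (m-1) + (1 - Q i) * g i m))"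
      unfolding v_def sum_distrib_right using F1 by (intro sum.cong) auto
    also have "\<dots> = a m + b m" unfolding a_def b_def
      by (simp add: sum.distrib[symmetric] algebra_simps)
    finally show ?thesis .
  qed
  have alpha: "SO_alpha n p p' t m = a m / (v * f m)" for m
    by (simp add: SO_alpha_def a_def v_def f_def SO_f_def SO_fi_def g_def N_def Q_def)
  have fSO: "SO_f n p t m = f m" for m by (simp add: f_def SO_f_def N_def Q_def)
  have oma: "1 - a m / (v * f m) = b m / (v * f m)" if "f m > 0" for m
  proof -
    have nz: "v * f m \<noteq> 0" using that v0 by simp
    have "1 - a m / (v * f m) = (v * f m - a m) / (v * f m)" using nz by (simp add: diff_divide_distrib)
    then show ?thesis using Fv[of m] by simp
  qed
  have expr: "SO_alpha n p p' t (k + 1) * (1 - SO_alpha n p p' t (k + 1)) * (SO_f n p t (k + 1))\<^sup>2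
    - SO_alpha n p p' t (k + 2) * (1 - SO_alpha n p p' t k) * SO_f n p t k * SO_f n p t (k + 2)
    = (a (k+1) * b (k+1) - a (k+2) * b k) / v^2"
    unfolding alpha fSO oma[OF fpos(1)] oma[OF fpos(2)] using fpos v0
    by (simp add: field_simps power2_eq_square)
  define T where "T = (\<lambda>i j. p' i * p' j * (Q i * (1 - Q j)) * (g i k * g j (k+1) - g i (k+1) * g j k))"
  have ab: "a (k+1) * b (k+1) - a (k+2) * b k = (\<Sum>i<n. \<Sum>j<n. T i j)"
  proof -
    have "a (k+1) * b (k+1) = (\<Sum>i<n. \<Sum>j<n. p' i * Q i * g i k * (p' j * (1 - Q j) * g j (k+1)))"
      unfolding a_def b_def sum_product by simp
    moreover have "a (k+2) * b k = (\<Sum>i<n. \<Sum>j<n. p' i * Q i * g i (k+1) * (p' j * (1 - Q j) * g j k))"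
      unfolding a_def b_def sum_product by (simp add: add.commute)
    ultimately show ?thesis unfolding T_def
      by (simp add: sum_subtractf[symmetric] algebra_simps)
  qed
  have pair: "T i j + T j i \<ge> 0" if ij: "i < n" "j < n" for i j
  proof (cases "i = j")
    case True then show ?thesis by (simp add: T_def)
  next
    case False
    define h where "h = pbin Q (N - {i} - {j})"
    have s1: "insert j (N - {i} - {j}) = N - {i}" using ij False by (auto simp: N_def)
    have s2: "insert i (N - {i} - {j}) = N - {j}" using ij False by (auto simp: N_def)
    have fin2: "finite (N - {i} - {j})" using finN by simp
    have gi: "g i m = Q j * h (m-1) + (1 - Q j) * h m" for m
      using pbin_insert[OF fin2, of j Q m] s1 by (simp add: g_def h_def)
    have gj: "g j m = Q i * h (m-1) + (1 - Q i) * h m" for m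
      using pbin_insert[OF fin2, of i Q m] s2 False by (simp add: g_def h_def)
    have e: "T i j + T j i = p' i * p' j * (Q i - Q j)^2 * ((h k)^2 - h (k-1) * h (k+1))"
      unfolding T_def gi gj by (simp add: algebra_simps power2_eq_square)
    have "h (k-1) * h (k+1) \<le> (h k)^2" unfolding h_def
      by (rule pbin_lc) (use fin2 qr in auto)
    moreover have "p' i \<ge> 0" "p' j \<ge> 0" using assms(2) ij by auto
    ultimately show ?thesis unfolding e by (intro mult_nonneg_nonneg) auto
  qed
  have "2 * (\<Sum>i<n. \<Sum>j<n. T i j) = (\<Sum>i<n. \<Sum>j<n. T i j) + (\<Sum>i<n. \<Sum>j<n. T j i)"
    using sum.swap[of T "{..<n}" "{..<n}"] by simp
  also have "\<dots> = (\<Sum>i<n. \<Sum>j<n. T i j + T j i)" by (simp add: sum.distrib)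
  also have "\<dots> \<ge> 0" using pair by (intro sum_nonneg) auto
  finally have "(\<Sum>i<n. \<Sum>j<n. T i j) \<ge> 0" by simp
  then show "SO_alpha n p p' t (k + 1) * (1 - SO_alpha n p p' t (k + 1)) * (SO_f n p t (k + 1))\<^sup>2
    - SO_alpha n p p' t (k + 2) * (1 - SO_alpha n p p' t k) * SO_f n p t k * SO_f n p t (k + 2) \<ge> 0"
    unfolding expr ab using v0 by simp
qed

end
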